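(* Consider $n$ parallel roads (indexed by $i\in[n]$) shared by $m$ vehicle types (indexed by $j\in[m]$), vehicle type $j$ having demand $\bar f^j\ge0$. A feasible routing is $f=(f^j_i)$ with $f^j_i\ge0$ and $\sum_i f^j_i=\bar f^j$ for each $j$. Road $i$ has latency $\ell_i(f)=b_i+\sum_j a^j_i f^j_i$ with constants $a^j_i\ge0$, $b_i\ge0$, and the social cost is $J(f)=\sum_i\big(\sum_j f^j_i\big)\ell_i(f)$. Then there exists a feasible routing $f$ minimizing $J$ such that no two distinct vehicle types $j\neq j'$ share more than one road with positive flow of both, i.e. there are no two distinct roads $i\neq i'$ with $f^j_i,f^{j'}_i,f^j_{i'},f^{j'}_{i'}>0$.
   Context: Parallel-road network with multiple vehicle types, affine road latencies with type-dependent coefficients, and social cost equal to total latency. *)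

theory Defs
  imports Complex_Main
begin

text \<open>Roads are indexed by i < n, vehicle types by j < m. A routing is
  f i j = flow of vehicle type j on road i.\<close>

definition feasible_routing ::
  "nat \<Rightarrow> nat \<Rightarrow> (nat \<Rightarrow> real) \<Rightarrow> (nat \<Rightarrow> nat \<Rightarrow> real) \<Rightarrow> bool" where
  "feasible_routing n m dem f \<longleftrightarrow>
     (\<forall>i<n. \<forall>j<m. f i j \<ge> 0) \<and> (\<forall>j<m. (\<Sum>i<n. f i j) = dem j)"

definition latency ::
  "nat \<Rightarrow> (nat \<Rightarrow> nat \<Rightarrow> real) \<Rightarrow> (nat \<Rightarrow> real) \<Rightarrow> (nat \<Rightarrow> nat \<Rightarrow> real) \<Rightarrow> nat \<Rightarrow> real" where
  "latency m a b f i = b i + (\<Sum>j<m. a i j * f i j)"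

definition social_cost ::
  "nat \<Rightarrow> nat \<Rightarrow> (nat \<Rightarrow> nat \<Rightarrow> real) \<Rightarrow> (nat \<Rightarrow> real) \<Rightarrow> (nat \<Rightarrow> nat \<Rightarrow> real) \<Rightarrow> real" where
  "social_cost n m a b f = (\<Sum>i<n. (\<Sum>j<m. f i j) * latency m a b f i)"

end

theory Submission
  imports Defs "HOL-Analysis.Analysis"
begin

definition supp :: "nat \<Rightarrow> nat \<Rightarrow> (nat \<Rightarrow> nat \<Rightarrow> real) \<Rightarrow> (nat \<times> nat) set" where
  "supp n m f = {(k,l). k<n \<and> l<m \<and> f k l > 0}"

lemma cost_shift:
  assumes "\<forall>k<n. (\<Sum>l<m. d k l) = 0"
  shows "social_cost n m a b (\<lambda>k l. f k l + t * d k l) =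
         social_cost n m a b f + t * (\<Sum>k<n. (\<Sum>l<m. f k l) * (\<Sum>l<m. a k l * d k l))"
proof -
  have r: "(\<Sum>l<m. f k l + t * d k l) = (\<Sum>l<m. f k l)" if "k<n" for k
    using assms that by (simp add: sum.distrib sum_distrib_left[symmetric])
  have la: "latency m a b (\<lambda>k l. f k l + t * d k l) k = latency m a b f k + t * (\<Sum>l<m. a k l * d k l)" for k
    by (simp add: latency_def algebra_simps sum.distrib sum_distrib_left)
  have "social_cost n m a b (\<lambda>k l. f k l + t * d k l) =
     (\<Sum>k<n. (\<Sum>l<m. f k l) * (latency m a b f k + t * (\<Sum>l<m. a k l * d k l)))"
    unfolding social_cost_def by (rule sum.cong) (simp_all add: r la)
  also have "\<dots> = social_cost n m a b f + t * (\<Sum>k<n. (\<Sum>l<m. f k l) * (\<Sum>l<m. a k l * d k l))"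
    unfolding social_cost_def by (simp add: distrib_left sum.distrib sum_distrib_left mult.left_commute)
  finally show ?thesis .
qed

lemma exchange:
  assumes feas: "feasible_routing n m dem f"
    and opt: "\<forall>g. feasible_routing n m dem g \<longrightarrow> social_cost n m a b f \<le> social_cost n m a b g"
    and jm: "j<m" "j'<m" "i<n" "i'<n" "j\<noteq>j'" "i\<noteq>i'"
    and pos: "f i j > 0" "f i j' > 0" "f i' j > 0" "f i' j' > 0"
  shows "\<exists>g. feasible_routing n m dem g \<and> social_cost n m a b g = social_cost n m a b f
             \<and> supp n m g \<subset> supp n m f"
proof -
  define d where "d = (\<lambda>k l. if k=i then (if l=j then -1 else if l=j' then 1 else 0)
     else if k=i' then (if l=j then 1 else if l=j' then -1 else 0) else (0::real))"
  have drow: "\<forall>k<n. (\<Sum>l<m. d k l) = 0"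
  proof (intro allI impI)
    fix k assume "k<n"
    have "(\<Sum>l<m. d k l) = (\<Sum>l\<in>{j,j'}. d k l)"
      by (rule sum.mono_neutral_right) (use jm in \<open>auto simp: d_def\<close>)
    then show "(\<Sum>l<m. d k l) = 0" using jm by (simp add: d_def)
  qed
  have dcol: "(\<Sum>k<n. d k l) = 0" if "l<m" for l
  proof -
    have "(\<Sum>k<n. d k l) = (\<Sum>k\<in>{i,i'}. d k l)"
      by (rule sum.mono_neutral_right) (use jm in \<open>auto simp: d_def\<close>)
    then show ?thesis using jm by (simp add: d_def)
  qed
  define c where "c = (\<Sum>k<n. (\<Sum>l<m. f k l) * (\<Sum>l<m. a k l * d k l))"
  have shift: "social_cost n m a b (\<lambda>k l. f k l + t * d k l) = social_cost n m a b f + t * c" for t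
    using cost_shift[OF drow] c_def by simp
  have feas_t: "feasible_routing n m dem (\<lambda>k l. f k l + t * d k l)"
    if t1: "t \<le> f i j" "t \<le> f i' j'" and t2: "-t \<le> f i j'" "-t \<le> f i' j" for t
  proof -
    have "f k l + t * d k l \<ge> 0" if "k<n" "l<m" for k l
      using feas that t1 t2 jm unfolding feasible_routing_def d_def by auto
    moreover have "(\<Sum>k<n. f k l + t * d k l) = dem l" if "l<m" for l
      using feas that dcol[OF that] unfolding feasible_routing_def
      by (simp add: sum.distrib sum_distrib_left[symmetric])
    ultimately show ?thesis unfolding feasible_routing_def by auto
  qed
  define \<mu> where "\<mu> = min (min (f i j) (f i' j')) (min (f i j') (f i' j))"
  have mupos: "\<mu> > 0" using pos by (simp add: \<mu>_def)
  have "feasible_routing n m dem (\<lambda>k l. f k l + \<mu> * d k l)"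
    by (rule feas_t) (use pos in \<open>auto simp: \<mu>_def\<close>)
  hence "social_cost n m a b f \<le> social_cost n m a b f + \<mu> * c"
    using opt shift[of \<mu>] by metis
  moreover have "feasible_routing n m dem (\<lambda>k l. f k l + (-\<mu>) * d k l)"
    by (rule feas_t) (use pos in \<open>auto simp: \<mu>_def\<close>)
  hence "social_cost n m a b f \<le> social_cost n m a b f + (-\<mu>) * c"
    using opt shift[of "-\<mu>"] by metis
  ultimately have "0 \<le> \<mu> * c" "0 \<le> -(\<mu> * c)" by simp_all
  hence "\<mu> * c = 0" by linarith
  hence c0: "c = 0" using mupos by simp
  define t where "t = min (f i j) (f i' j')"
  define g where "g = (\<lambda>k l. f k l + t * d k l)"
  have tpos: "t > 0" using pos by (simp add: t_def)
  have fg: "feasible_routing n m dem g" unfolding g_def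
    by (rule feas_t) (use pos in \<open>auto simp: t_def\<close>)
  have cg: "social_cost n m a b g = social_cost n m a b f" unfolding g_def using shift c0 by simp
  have sub: "supp n m g \<subseteq> supp n m f"
  proof
    fix x assume "x \<in> supp n m g"
    then obtain k l where x: "x = (k,l)" "k<n" "l<m" "g k l > 0" by (auto simp: supp_def)
    show "x \<in> supp n m f"
      using x pos tpos jm unfolding supp_def g_def d_def by (auto split: if_splits)
  qed
  have "g i j = 0 \<or> g i' j' = 0" using jm by (simp add: g_def d_def t_def min_def)
  moreover have "(i,j) \<in> supp n m f" "(i',j') \<in> supp n m f" using pos jm by (auto simp: supp_def)
  moreover have "g i j = 0 \<Longrightarrow> (i,j) \<notin> supp n m g" "g i' j' = 0 \<Longrightarrow> (i',j') \<notin> supp n m g"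
    by (auto simp: supp_def)
  ultimately have "supp n m g \<noteq> supp n m f" by metis
  with sub fg cg show ?thesis by blast
qed

lemma ev_cont: "continuous_on S (\<lambda>f::nat\<Rightarrow>nat\<Rightarrow>real. f i j)"
proof -
  have "continuous_on S (\<lambda>f::nat\<Rightarrow>nat\<Rightarrow>real. f i)"
    by (rule continuous_on_product_then_coordinatewise[where f="\<lambda>f. f"]) (rule continuous_on_id)
  then show ?thesis by (rule continuous_on_product_then_coordinatewise)
qed

lemma cost_cont: "continuous_on S (social_cost n m a b)"
  unfolding social_cost_def latency_def
  by (intro continuous_intros ev_cont)

lemma box_compact:
  fixes B :: "nat \<Rightarrow> nat \<Rightarrow> real"
  assumes "\<And>i j. B i j \<ge> 0"
  shows "compact (PiE UNIV (\<lambda>i. PiE UNIV (\<lambda>j. {0..B i j})))"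
proof -
  have inner: "compact (PiE UNIV (\<lambda>j. {0..B i j}))" for i
  proof -
    have "compactin (product_topology (\<lambda>j. euclidean) UNIV) (PiE UNIV (\<lambda>j. {0..B i j}))"
      by (simp add: compactin_PiE)
    then show ?thesis by (simp add: euclidean_product_topology)
  qed
  have "compactin (product_topology (\<lambda>j. euclidean) UNIV) (PiE UNIV (\<lambda>i. PiE UNIV (\<lambda>j. {0..B i j})))"
    by (simp add: compactin_PiE inner)
  then show ?thesis by (simp add: euclidean_product_topology)
qed

lemma exists_opt:
  fixes n m :: nat and dem :: "nat \<Rightarrow> real"
  assumes n1: "n \<ge> 1" and dpos: "\<forall>j<m. dem j \<ge> 0"
  shows "\<exists>f. feasible_routing n m dem f \<and>
     (\<forall>g. feasible_routing n m dem g \<longrightarrow> social_cost n m a b f \<le> social_cost n m a b g)"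
proof -
  define B where "B = (\<lambda>i j. if i<n \<and> j<m then dem j else (0::real))"
  have B0: "B i j \<ge> 0" for i j using dpos by (simp add: B_def)
  define K where "K = PiE UNIV (\<lambda>i. PiE UNIV (\<lambda>j. {0..B i j}))"
  define S where "S = K \<inter> (\<Inter>j\<in>{..<m}. {f. (\<Sum>i<n. f i j) = dem j})"
  have "compact K" unfolding K_def by (rule box_compact[OF B0])
  moreover have "closed (\<Inter>j\<in>{..<m}. {f::nat\<Rightarrow>nat\<Rightarrow>real. (\<Sum>i<n. f i j) = dem j})"
    by (intro closed_INT ballI closed_Collect_eq continuous_intros ev_cont)
  ultimately have cS: "compact S" unfolding S_def by (rule compact_Int_closed)
  define f0 where "f0 = (\<lambda>(i::nat) j. if i = 0 \<and> j < m then dem j else (0::real))"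
  have "f0 \<in> S"
  proof -
    have "f0 \<in> K" unfolding K_def f0_def B_def using dpos n1 by auto
    moreover have "(\<Sum>i<n. f0 i j) = dem j" if "j<m" for j
    proof -
      have "(\<Sum>i<n. f0 i j) = (\<Sum>i\<in>{0}. f0 i j)"
        by (rule sum.mono_neutral_right) (use n1 in \<open>auto simp: f0_def\<close>)
      then show ?thesis using that by (simp add: f0_def)
    qed
    ultimately show ?thesis unfolding S_def by auto
  qed
  then obtain f where fS: "f \<in> S" and fmin: "\<forall>y\<in>S. social_cost n m a b f \<le> social_cost n m a b y"
    using continuous_attains_inf[OF cS _ cost_cont] by blast
  have feasS: "feasible_routing n m dem g" if "g \<in> S" for g
    using that unfolding S_def K_def B_def feasible_routing_def by (fastforce simp: PiE_iff)
  show ?thesis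
  proof (intro exI conjI allI impI)
    show "feasible_routing n m dem f" using feasS fS .
    fix g assume g: "feasible_routing n m dem g"
    define g' where "g' = (\<lambda>i j. if i<n \<and> j<m then g i j else 0)"
    have "g' \<in> K"
    proof -
      have "g i j \<le> dem j" if "i<n" "j<m" for i j
      proof -
        have "g i j = (\<Sum>k\<in>{i}. g k j)" by simp
        also have "\<dots> \<le> (\<Sum>k<n. g k j)"
          by (rule sum_mono2) (use g that in \<open>auto simp: feasible_routing_def\<close>)
        finally show ?thesis using g that by (simp add: feasible_routing_def)
      qed
      then show ?thesis using g unfolding K_def g'_def B_def feasible_routing_def by auto
    qed
    moreover have "(\<Sum>i<n. g' i j) = dem j" if "j<m" for j
      using g that unfolding g'_def feasible_routing_def by simp
    ultimately have "g' \<in> S" unfolding S_def by auto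
    moreover have "social_cost n m a b g' = social_cost n m a b g"
      unfolding social_cost_def latency_def g'_def by simp
    ultimately show "social_cost n m a b f \<le> social_cost n m a b g" using fmin by metis
  qed
qed


lemma reduce:
  assumes "feasible_routing n m dem f"
    and "\<forall>g. feasible_routing n m dem g \<longrightarrow> social_cost n m a b f \<le> social_cost n m a b g"
  shows "\<exists>f. feasible_routing n m dem f
           \<and> (\<forall>g. feasible_routing n m dem g \<longrightarrow> social_cost n m a b f \<le> social_cost n m a b g)
           \<and> \<not> (\<exists>j<m. \<exists>j'<m. \<exists>i<n. \<exists>i'<n. j \<noteq> j' \<and> i \<noteq> i' \<and>
                  f i j > 0 \<and> f i j' > 0 \<and> f i' j > 0 \<and> f i' j' > 0)"
  using assms
proof (induction f rule: measure_induct_rule[where f="\<lambda>f. card (supp n m f)"])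
  case (less f)
  show ?case
  proof (cases "\<exists>j<m. \<exists>j'<m. \<exists>i<n. \<exists>i'<n. j \<noteq> j' \<and> i \<noteq> i' \<and>
                  f i j > 0 \<and> f i j' > 0 \<and> f i' j > 0 \<and> f i' j' > 0")
    case True
    then obtain j j' i i' where "j<m" "j'<m" "i<n" "i'<n" "j \<noteq> j'" "i \<noteq> i'"
      "f i j > 0" "f i j' > 0" "f i' j > 0" "f i' j' > 0" by blast
    from exchange[OF less.prems this] obtain g where g: "feasible_routing n m dem g"
      "social_cost n m a b g = social_cost n m a b f" "supp n m g \<subset> supp n m f" by blast
    have fin: "finite (supp n m f)"
      by (rule finite_subset[of _ "{..<n} \<times> {..<m}"]) (auto simp: supp_def)
    have "card (supp n m g) < card (supp n m f)" using psubset_card_mono[OF fin g(3)] .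
    moreover have "\<forall>h. feasible_routing n m dem h \<longrightarrow> social_cost n m a b g \<le> social_cost n m a b h"
      using less.prems(2) g(2) by simp
    ultimately show ?thesis using less.IH g(1) by blast
  next
    case False
    then show ?thesis using less.prems by blast
  qed
qed

theorem corollary1:
  fixes n m :: nat and dem :: "nat \<Rightarrow> real" and a :: "nat \<Rightarrow> nat \<Rightarrow> real" and b :: "nat \<Rightarrow> real"
  assumes "n \<ge> 1"
    and "\<forall>j<m. dem j \<ge> 0"
    and "\<forall>i<n. \<forall>j<m. a i j \<ge> 0"
    and "\<forall>i<n. b i \<ge> 0"
  shows "\<exists>f. feasible_routing n m dem f
           \<and> (\<forall>g. feasible_routing n m dem g \<longrightarrow> social_cost n m a b f \<le> social_cost n m a b g)
           \<and> \<not> (\<exists>j<m. \<exists>j'<m. \<exists>i<n. \<exists>i'<n. j \<noteq> j' \<and> i \<noteq> i' \<and>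
                  f i j > 0 \<and> f i j' > 0 \<and> f i' j > 0 \<and> f i' j' > 0)"
proof -
  obtain f where "feasible_routing n m dem f"
    "\<forall>g. feasible_routing n m dem g \<longrightarrow> social_cost n m a b f \<le> social_cost n m a b g"
    using exists_opt[OF assms(1,2)] by blast
  then show ?thesis by (rule reduce)
qed

end
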